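(* If $\{T_i\}_{i=1}^M$ is an extremal quantum $1$-tester on $\mathcal H_2\otimes\mathcal H_1$ with normalization $I_2\otimes\rho$, $r=\operatorname{rank}\rho$ and $r_i=\operatorname{rank}T_i$, then $$\sum_{i=1}^Mr_i^2+r^2-1\le (r\,d_2)^2.$$ In particular the number of outcomes satisfies $M\le d_1^2(d_2^2-1)+1$ (assuming all $T_i\neq0$).
   Context: $d_k=\dim\mathcal H_k<\infty$. A quantum $1$-tester with $M$ outcomes is a family of positive operators $\{T_i\}_{i=1}^M$ on $\mathcal H_2\otimes\mathcal H_1$ with $\sum_iT_i=I_2\otimes\rho$ for a density operator $\rho$ on $\mathcal H_1$; extremal means an extreme point of the convex set of all such testers with $M$ outcomes. *)

theory Defs
  imports "HOL-Analysis.Analysis"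
begin

definition psd :: "complex^'n^'n \<Rightarrow> bool" where
  "psd A \<longleftrightarrow> (\<forall>v :: complex^'n.
      (\<Sum>i\<in>UNIV. \<Sum>j\<in>UNIV. cnj (v$i) * A$i$j * v$j) \<in> \<real> \<and>
      0 \<le> Re (\<Sum>i\<in>UNIV. \<Sum>j\<in>UNIV. cnj (v$i) * A$i$j * v$j))"

definition density :: "complex^'n^'n \<Rightarrow> bool" where
  "density \<rho> \<longleftrightarrow> psd \<rho> \<and> (\<Sum>i\<in>UNIV. \<rho>$i$i) = 1"

text \<open>I_2 tensor rho on H_2 (x) H_1, basis indexed by pairs (i2, i1).\<close>
definition id_tensor :: "complex^'a^'a \<Rightarrow> complex^('b::finite \<times> 'a)^('b \<times> 'a)" where
  "id_tensor \<rho> = (\<chi> p q. (if fst p = fst q then 1 else 0) * \<rho> $ snd p $ snd q)"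

text \<open>A quantum 1-tester with outcomes indexed by the finite type 'm (M = CARD('m)).\<close>
definition is_tester ::
  "complex^('b::finite \<times> 'a::finite)^('b \<times> 'a)^'m \<Rightarrow> complex^'a^'a \<Rightarrow> bool" where
  "is_tester T \<rho> \<longleftrightarrow> (\<forall>i. psd (T$i)) \<and> density \<rho> \<and> (\<Sum>i\<in>UNIV. T$i) = id_tensor \<rho>"

definition testers :: "(complex^('b::finite \<times> 'a::finite)^('b \<times> 'a)^'m) set" where
  "testers = {T. \<exists>\<rho>. is_tester T \<rho>}"

end

theory Submission
  imports Defs
begin


definition ip :: "complex^'n \<Rightarrow> complex^'n \<Rightarrow> complex" where
  "ip u w = (\<Sum>i\<in>UNIV. cnj (u$i) * w$i)"

definition adj :: "complex^'n^'n \<Rightarrow> complex^'n^'n" where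
  "adj A = (\<chi> i j. cnj (A$j$i))"

lemma psd_ip: "psd A \<longleftrightarrow> (\<forall>v. ip v (A *v v) \<in> \<real> \<and> 0 \<le> Re (ip v (A *v v)))"
proof -
  have "\<And>v. (\<Sum>i\<in>UNIV. \<Sum>j\<in>UNIV. cnj (v$i) * A$i$j * v$j) = ip v (A *v v)"
    by (simp add: ip_def matrix_vector_mult_def sum_distrib_left mult.assoc)
  then show ?thesis unfolding psd_def by simp
qed

lemma ip_add_left: "ip (u + v) w = ip u w + ip v w"
  by (simp add: ip_def sum.distrib algebra_simps)
lemma ip_add_right: "ip u (v + w) = ip u v + ip u w"
  by (simp add: ip_def sum.distrib algebra_simps)
lemma ip_diff_left: "ip (u - v) w = ip u w - ip v w"
  by (simp add: ip_def sum_subtractf algebra_simps)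
lemma ip_diff_right: "ip u (v - w) = ip u v - ip u w"
  by (simp add: ip_def sum_subtractf algebra_simps)
lemma ip_scale_left: "ip (c *s u) w = cnj c * ip u w"
  by (simp add: ip_def sum_distrib_left algebra_simps)
lemma ip_scale_right: "ip u (c *s w) = c * ip u w"
  by (simp add: ip_def sum_distrib_left algebra_simps)
lemma ip_zero_left[simp]: "ip 0 w = 0" by (simp add: ip_def)
lemma ip_zero_right[simp]: "ip u 0 = 0" by (simp add: ip_def)

lemma ip_self: "ip v v = of_real (\<Sum>i\<in>UNIV. (cmod (v$i))^2)"
  by (simp add: ip_def mult.commute complex_mult_cnj cmod_def)

lemma ip_adj: "ip u (A *v w) = ip (adj A *v u) w"
proof -
  have "ip u (A *v w) = (\<Sum>i\<in>UNIV. \<Sum>j\<in>UNIV. cnj (u$i) * (A$i$j * w$j))"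
    by (simp add: ip_def matrix_vector_mult_def sum_distrib_left)
  also have "\<dots> = (\<Sum>j\<in>UNIV. \<Sum>i\<in>UNIV. cnj (u$i) * (A$i$j * w$j))"
    by (rule sum.swap)
  also have "\<dots> = (\<Sum>j\<in>UNIV. (\<Sum>i\<in>UNIV. cnj (u$i) * A$i$j) * w$j)"
    by (simp add: sum_distrib_right mult.assoc)
  also have "\<dots> = ip (adj A *v u) w"
    by (simp add: ip_def adj_def matrix_vector_mult_def mult.commute)
  finally show ?thesis .
qed

lemma adj_adj[simp]: "adj (adj A) = A"
  by (simp add: adj_def vec_eq_iff)

lemma adj_mult: "adj (A ** B) = adj B ** adj A"
  by (simp add: adj_def vec_eq_iff matrix_matrix_mult_def mult.commute)

lemma adj_add: "adj (A + B) = adj A + adj B"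
  by (simp add: adj_def vec_eq_iff)
lemma adj_diff: "adj (A - B) = adj A - adj B"
  by (simp add: adj_def vec_eq_iff)
lemma adj_sum: "adj (sum f S) = sum (\<lambda>i. adj (f i)) S"
  by (induction S rule: infinite_finite_induct) (auto simp: adj_add adj_def vec_eq_iff)
lemma adj_zero[simp]: "adj 0 = 0"
  by (simp add: adj_def vec_eq_iff)

lemma ip_axis_left: "ip (axis i a) w = cnj a * w$i"
proof -
  have "ip (axis i a) w = (\<Sum>k\<in>UNIV. if k = i then cnj a * w$k else 0)"
    unfolding ip_def by (rule sum.cong) (auto simp: axis_def)
  then show ?thesis by simp
qed

lemma mv_axis: "(A *v axis j b) = (\<chi> i. A$i$j * b)"
  by (simp add: matrix_vector_mult_def axis_def vec_eq_iff if_distrib cong: if_cong)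

lemma q_two: 
  assumes "i \<noteq> j"
  shows "ip (axis i a + axis j b) (A *v (axis i a + axis j b)) =
    cnj a * A$i$i * a + cnj a * A$i$j * b + cnj b * A$j$i * a + cnj b * A$j$j * b"
  using assms
  by (simp add: ip_add_left matrix_vector_right_distrib ip_add_right ip_axis_left mv_axis algebra_simps)

lemma psd_herm:
  assumes "psd A" shows "adj A = A"
proof -
  have R: "\<And>v. ip v (A *v v) \<in> \<real>" using assms by (simp add: psd_ip)
  have E: "A$j$i = cnj (A$i$j)" for i j
  proof (cases "i = j")
    case True
    have "ip (axis i 1) (A *v axis i 1) = A$i$i" by (simp add: ip_axis_left mv_axis)
    then have "A$i$i \<in> \<real>" using R[of "axis i 1"] by simp
    then show ?thesis using True by (simp add: Reals_cnj_iff)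
  next
    case False
    have 1: "A$i$i + A$i$j + A$j$i + A$j$j \<in> \<real>"
      using R[of "axis i 1 + axis j 1"] q_two[OF False, where a=1 and b=1 and A=A] by simp
    have e2: "ip (axis i 1 + axis j \<i>) (A *v (axis i 1 + axis j \<i>)) = A$i$i + \<i> * A$i$j - \<i> * A$j$i + A$j$j"
    proof -
      have "ip (axis i 1 + axis j \<i>) (A *v (axis i 1 + axis j \<i>)) =
        cnj 1 * A$i$i * 1 + cnj 1 * A$i$j * \<i> + cnj \<i> * A$j$i * 1 + cnj \<i> * A$j$j * \<i>"
        by (rule q_two[OF False])
      also have "cnj \<i> * A$j$j * \<i> = A$j$j" by (simp add: mult.commute mult.left_commute)
      finally show ?thesis by (simp add: mult.commute)
    qed
    have 2: "A$i$i + \<i> * A$i$j - \<i> * A$j$i + A$j$j \<in> \<real>"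
      using R[of "axis i 1 + axis j \<i>"] unfolding e2 .
    have ii: "A$i$i \<in> \<real>" using R[of "axis i 1"] by (simp add: ip_axis_left mv_axis)
    have jj: "A$j$j \<in> \<real>" using R[of "axis j 1"] by (simp add: ip_axis_left mv_axis)
    have a: "Im (A$i$j) + Im (A$j$i) = 0" using 1 ii jj by (simp add: complex_is_Real_iff)
    have b: "Re (A$i$j) - Re (A$j$i) = 0" using 2 ii jj by (simp add: complex_is_Real_iff)
    from a b show ?thesis by (simp add: complex_eq_iff)
  qed
  have "cnj (A$j$i) = A$i$j" for i j using E[of j i] by simp
  then show ?thesis by (simp add: adj_def vec_eq_iff)
qed


definition nrm2 :: "complex^'n \<Rightarrow> real" where
  "nrm2 v = (\<Sum>i\<in>UNIV. (cmod (v$i))^2)"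

lemma ip_self_nrm: "ip v v = of_real (nrm2 v)"
  by (simp add: ip_self nrm2_def)

lemma nrm2_nonneg: "0 \<le> nrm2 v" by (simp add: nrm2_def sum_nonneg)

lemma nrm2_zero: "nrm2 v \<le> 0 \<Longrightarrow> v = 0"
proof -
  assume "nrm2 v \<le> 0"
  then have "(\<Sum>i\<in>UNIV. (cmod (v$i))^2) = 0" using nrm2_nonneg[of v] by (simp add: nrm2_def)
  then have "\<forall>i\<in>UNIV. (cmod (v$i))^2 = 0" by (subst (asm) sum_nonneg_eq_0_iff) auto
  then show "v = 0" by (simp add: vec_eq_iff)
qed

lemma comp_le_nrm2: "(cmod (v$i))^2 \<le> nrm2 v"
  unfolding nrm2_def by (rule member_le_sum) auto

lemma prod_le_nrm2: "cmod (v$i) * cmod (v$j) \<le> nrm2 v"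
proof -
  have "cmod (v$i) * cmod (v$j) \<le> (max (cmod (v$i)) (cmod (v$j)))^2"
    by (simp add: power2_eq_square mult_mono max_def)
  also have "\<dots> \<le> nrm2 v" using comp_le_nrm2[of v i] comp_le_nrm2[of v j]
    by (simp add: max_def)
  finally show ?thesis .
qed

lemma qbound: "cmod (ip w (A *v w)) \<le> (\<Sum>i\<in>UNIV. \<Sum>j\<in>UNIV. cmod (A$i$j)) * nrm2 w"
proof -
  have "cmod (ip w (A *v w)) = cmod (\<Sum>i\<in>UNIV. \<Sum>j\<in>UNIV. cnj (w$i) * A$i$j * w$j)"
    by (simp add: ip_def matrix_vector_mult_def sum_distrib_left mult.assoc)
  also have "\<dots> \<le> (\<Sum>i\<in>UNIV. \<Sum>j\<in>UNIV. cmod (cnj (w$i) * A$i$j * w$j))"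
    by (rule order_trans[OF norm_sum sum_mono]) (rule norm_sum)
  also have "\<dots> \<le> (\<Sum>i\<in>UNIV. \<Sum>j\<in>UNIV. cmod (A$i$j) * nrm2 w)"
  proof (intro sum_mono)
    fix i j
    have "cmod (cnj (w$i) * A$i$j * w$j) = cmod (A$i$j) * (cmod (w$i) * cmod (w$j))"
      by (simp add: norm_mult)
    also have "\<dots> \<le> cmod (A$i$j) * nrm2 w"
      by (rule mult_left_mono[OF prod_le_nrm2]) simp
    finally show "cmod (cnj (w$i) * A$i$j * w$j) \<le> cmod (A$i$j) * nrm2 w" .
  qed
  also have "\<dots> = (\<Sum>i\<in>UNIV. \<Sum>j\<in>UNIV. cmod (A$i$j)) * nrm2 w"
    by (simp add: sum_distrib_right)
  finally show ?thesis .
qed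

lemma mv_scale: "A *v (c *s x) = c *s (A *v x)" for A :: "complex^'n^'m"
  unfolding matrix_vector_mult_def vec_eq_iff
  by (auto simp: sum_distrib_left mult.left_commute intro!: sum.cong)

lemma ip_conj: "ip u w = cnj (ip w u)"
  by (simp add: ip_def mult.commute)

lemma herm_real: "adj D = D \<Longrightarrow> ip v (D *v v) \<in> \<real>"
proof -
  assume h: "adj D = D"
  have "ip v (D *v v) = ip (D *v v) v" using ip_adj[of v D v] h by simp
  also have "\<dots> = cnj (ip v (D *v v))" by (rule ip_conj)
  finally show ?thesis by (metis Reals_cnj_iff)
qed

lemma psd_range_bound:
  assumes "psd T"
  shows "\<exists>C>0. \<forall>v. nrm2 (T *v v) \<le> C * Re (ip v (T *v v))"
proof -
  define C0 where "C0 = (\<Sum>i\<in>UNIV. \<Sum>j\<in>UNIV. cmod (T$i$j))"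
  have C0: "0 \<le> C0" unfolding C0_def by (intro sum_nonneg) auto
  define C where "C = C0 + 1"
  have Cpos: "C > 0" using C0 by (simp add: C_def)
  have h: "adj T = T" using psd_herm[OF assms] .
  have P: "\<And>v. ip v (T *v v) \<in> \<real> \<and> 0 \<le> Re (ip v (T *v v))" using assms by (simp add: psd_ip)
  have "nrm2 (T *v v) \<le> C * Re (ip v (T *v v))" for v
  proof -
    define w where "w = T *v v"
    define n where "n = nrm2 w"
    define c where "c = (of_real (1 / C) :: complex)"
    have e1: "ip w (T *v v) = of_real n" by (simp add: w_def n_def ip_self_nrm)
    have e2: "ip v (T *v w) = of_real n"
      using ip_adj[of v T w] h by (simp add: w_def n_def ip_self_nrm)
    have exp: "ip (v - c *s w) (T *v (v - c *s w)) =
      ip v (T *v v) - c * ip v (T *v w) - cnj c * ip w (T *v v) + cnj c * c * ip w (T *v w)"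
      by (simp add: matrix_vector_mult_diff_distrib mv_scale ip_diff_left ip_diff_right
          ip_scale_left ip_scale_right algebra_simps)
    have "0 \<le> Re (ip (v - c *s w) (T *v (v - c *s w)))" using P by blast
    also have "\<dots> = Re (ip v (T *v v)) - 2 * n / C + Re (ip w (T *v w)) / C^2"
    proof -
      have "ip (v - c *s w) (T *v (v - c *s w)) = ip v (T *v v) - c * of_real n - cnj c * of_real n + cnj c * c * ip w (T *v w)"
        by (simp only: exp e1 e2)
      then show ?thesis by (simp add: c_def power2_eq_square)
    qed
    also have "Re (ip w (T *v w)) \<le> C0 * n"
      using qbound[of w T] complex_Re_le_cmod[of "ip w (T *v w)"] unfolding C0_def n_def by linarith
    hence "Re (ip w (T *v w)) / C^2 \<le> C * n / C^2"
      using nrm2_nonneg[of w] unfolding n_def C_def by (intro divide_right_mono) (auto simp: algebra_simps)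
    finally have "0 \<le> Re (ip v (T *v v)) - 2 * n / C + C * n / C^2" by simp
    also have "C * n / C^2 = n / C" using Cpos by (simp add: power2_eq_square)
    finally have "n / C \<le> Re (ip v (T *v v))" by simp
    then show ?thesis using Cpos unfolding n_def w_def by (simp add: divide_le_eq mult.commute)
  qed
  then show ?thesis using Cpos by blast
qed

lemma psd_kernel:
  assumes "psd T" "Re (ip v (T *v v)) = 0"
  shows "T *v v = 0"
proof -
  obtain C where "C > 0" "\<And>v. nrm2 (T *v v) \<le> C * Re (ip v (T *v v))"
    using psd_range_bound[OF assms(1)] by blast
  then have "nrm2 (T *v v) \<le> 0" using assms(2) by (metis mult_zero_right)
  then show ?thesis by (rule nrm2_zero)
qed



lemma sandwich_qbound:
  assumes "psd T"
  shows "\<exists>c\<ge>0. \<forall>v. cmod (ip v ((T ** Y ** T) *v v)) \<le> c * Re (ip v (T *v v))"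
proof -
  obtain C where C: "C > 0" "\<And>v. nrm2 (T *v v) \<le> C * Re (ip v (T *v v))"
    using psd_range_bound[OF assms] by blast
  define CY where "CY = (\<Sum>i\<in>UNIV. \<Sum>j\<in>UNIV. cmod (Y$i$j))"
  have CY: "0 \<le> CY" unfolding CY_def by (intro sum_nonneg) auto
  have h: "adj T = T" using psd_herm[OF assms] .
  have "cmod (ip v ((T ** Y ** T) *v v)) \<le> (CY * C) * Re (ip v (T *v v))" for v
  proof -
    have "ip v ((T ** Y ** T) *v v) = ip v (T *v (Y *v (T *v v)))"
      by (simp add: matrix_vector_mul_assoc matrix_mul_assoc)
    also have "\<dots> = ip (T *v v) (Y *v (T *v v))" using ip_adj[of v T] h by simp
    finally have "cmod (ip v ((T ** Y ** T) *v v)) \<le> CY * nrm2 (T *v v)"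
      using qbound[of "T *v v" Y] unfolding CY_def by simp
    also have "\<dots> \<le> CY * (C * Re (ip v (T *v v)))"
      by (rule mult_left_mono[OF C(2) CY])
    finally show ?thesis by (simp add: mult.assoc)
  qed
  then show ?thesis using CY C(1) by (intro exI[of _ "CY * C"]) auto
qed

lemma mv_scaleR: "(e *\<^sub>R D) *v v = (of_real e :: complex) *s (D *v v)"
  for D :: "complex^'n^'m"
proof -
  have c: "(e *\<^sub>R D)$i$j = of_real e * D$i$j" for i j
    by (metis vector_scaleR_component scaleR_conv_of_real)
  show ?thesis unfolding matrix_vector_mult_def vec_eq_iff c
    by (auto simp: sum_distrib_left mult.assoc intro!: sum.cong)
qed

lemma mv_add_mat: "(A + B) *v v = A *v v + B *v v"
  for A :: "complex^'n^'m"
  by (simp add: matrix_vector_mult_add_rdistrib)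

lemma perturb_psd:
  assumes "psd T" "adj D = D" "c \<ge> 0"
    and b: "\<And>v. cmod (ip v (D *v v)) \<le> c * Re (ip v (T *v v))"
    and e: "\<bar>e\<bar> * c \<le> 1"
  shows "psd (T + e *\<^sub>R D)"
  unfolding psd_ip
proof
  fix v
  have eq: "ip v ((T + e *\<^sub>R D) *v v) = ip v (T *v v) + of_real e * ip v (D *v v)"
    by (simp add: mv_add_mat mv_scaleR ip_add_right ip_scale_right)
  have r1: "ip v (T *v v) \<in> \<real>" and p1: "0 \<le> Re (ip v (T *v v))"
    using assms(1) by (auto simp: psd_ip)
  have r2: "ip v (D *v v) \<in> \<real>" using herm_real[OF assms(2)] .
  have "\<bar>e * Re (ip v (D *v v))\<bar> \<le> \<bar>e\<bar> * (c * Re (ip v (T *v v)))"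
    using b[of v] abs_Re_le_cmod[of "ip v (D *v v)"] by (simp add: abs_mult mult_left_mono)
  also have "\<dots> = (\<bar>e\<bar> * c) * Re (ip v (T *v v))" by simp
  also have "\<dots> \<le> Re (ip v (T *v v))" using mult_right_mono[OF e p1] by simp
  finally have "0 \<le> Re (ip v (T *v v)) + e * Re (ip v (D *v v))" by linarith
  then show "ip v ((T + e *\<^sub>R D) *v v) \<in> \<real> \<and> 0 \<le> Re (ip v ((T + e *\<^sub>R D) *v v))"
    unfolding eq using r1 r2 by auto
qed

lemma sum_mv: "(sum f S) *v v = (\<Sum>i\<in>S. f i *v v)" for f :: "'i \<Rightarrow> complex^'n^'m"
  by (induction S rule: infinite_finite_induct) (auto simp: mv_add_mat)

lemma ip_sum_right: "ip u (sum f S) = (\<Sum>i\<in>S. ip u (f i))"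
  by (induction S rule: infinite_finite_induct) (auto simp: ip_add_right)

lemma psd_sum: "(\<And>i. i \<in> S \<Longrightarrow> psd (f i)) \<Longrightarrow> psd (sum f S)"
  unfolding psd_ip
proof
  fix v assume a: "\<And>i. i \<in> S \<Longrightarrow> \<forall>v. ip v (f i *v v) \<in> \<real> \<and> 0 \<le> Re (ip v (f i *v v))"
  have "ip v (sum f S *v v) = (\<Sum>i\<in>S. ip v (f i *v v))" by (simp add: sum_mv ip_sum_right)
  moreover have "(\<Sum>i\<in>S. ip v (f i *v v)) \<in> \<real>" using a by (intro sum_in_Reals) auto
  moreover have "0 \<le> Re (\<Sum>i\<in>S. ip v (f i *v v))" using a by (simp add: Re_sum sum_nonneg)
  ultimately show "ip v (sum f S *v v) \<in> \<real> \<and> 0 \<le> Re (ip v (sum f S *v v))" by simp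
qed

lemma psd_add: "psd A \<Longrightarrow> psd B \<Longrightarrow> psd (A + B)"
  using psd_sum[of "{0::nat,1}" "\<lambda>i. if i = 0 then A else B"] by auto

lemma sum_pair: "(\<Sum>p\<in>(UNIV::('b::finite\<times>'a::finite) set). f p) = (\<Sum>b\<in>UNIV. \<Sum>a\<in>UNIV. f (b,a))"
  by (simp add: sum.cartesian_product UNIV_Times_UNIV[symmetric] del: UNIV_Times_UNIV)

lemma id_tensor_psd:
  fixes A :: "complex^'a::finite^'a"
  assumes "psd (id_tensor A :: complex^('b::finite\<times>'a)^('b\<times>'a))"
  shows "psd A"
  unfolding psd_ip
proof
  fix v :: "complex^'a"
  obtain b0 :: 'b where True by blast
  define w :: "complex^('b\<times>'a)" where "w = (\<chi> p. if fst p = b0 then v$(snd p) else 0)"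
  have mv: "(id_tensor A *v w) = (\<chi> p. if fst p = b0 then (A *v v)$(snd p) else 0)"
    unfolding vec_eq_iff
  proof
    fix p :: "'b\<times>'a"
    obtain b a where p: "p = (b,a)" by (cases p)
    have "(id_tensor A *v w)$p = (\<Sum>b'\<in>UNIV. \<Sum>a'\<in>UNIV. (if b = b' then 1 else 0) * A$a$a' * (if b' = b0 then v$a' else 0))"
      by (simp add: matrix_vector_mult_def id_tensor_def w_def sum_pair p cong: if_cong)
    also have "\<dots> = (\<Sum>b'\<in>UNIV. if b' = b then (\<Sum>a'\<in>UNIV. (if b' = b0 then A$a$a' * v$a' else 0)) else 0)"
      by (rule sum.cong[OF refl]) (auto intro!: sum.cong)
    also have "\<dots> = (if b = b0 then (A *v v)$a else 0)"
      by (simp add: matrix_vector_mult_def)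
    finally show "(id_tensor A *v w)$p = (\<chi> p. if fst p = b0 then (A *v v)$(snd p) else 0)$p"
      by (simp add: p)
  qed
  have "ip w (id_tensor A *v w) = (\<Sum>b\<in>UNIV. \<Sum>a\<in>UNIV. if b = b0 then cnj (v$a) * (A *v v)$a else 0)"
    unfolding mv by (simp add: ip_def sum_pair w_def cong: if_cong) (auto intro!: sum.cong)
  also have "\<dots> = (\<Sum>b\<in>UNIV. if b = b0 then ip v (A *v v) else 0)"
    by (rule sum.cong) (auto simp: ip_def)
  also have "\<dots> = ip v (A *v v)" by simp
  finally have "ip w (id_tensor A *v w) = ip v (A *v v)" .
  then show "ip v (A *v v) \<in> \<real> \<and> 0 \<le> Re (ip v (A *v v))"
    using assms unfolding psd_ip by metis
qed



lemma id_tensor_add: "id_tensor (A + B) = (id_tensor A + id_tensor B :: complex^('b::finite\<times>'a::finite)^('b\<times>'a))"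
  by (simp add: id_tensor_def vec_eq_iff algebra_simps)

lemma id_tensor_scaleR: "id_tensor (e *\<^sub>R A) = (e *\<^sub>R id_tensor A :: complex^('b::finite\<times>'a::finite)^('b\<times>'a))"
  by (simp add: id_tensor_def vec_eq_iff mult_scaleR_right)

lemma midpoint_pm: "midpoint (x + e *\<^sub>R d) (x + (-e) *\<^sub>R d) = (x::'v::real_vector)"
proof -
  have "x + e *\<^sub>R d + (x + (-e) *\<^sub>R d) = 2 *\<^sub>R x"
    by (simp add: scaleR_2 algebra_simps)
  then show ?thesis by (simp add: midpoint_def)
qed

lemma tester_perturb:
  fixes T H :: "complex^('b::finite \<times> 'a::finite)^('b \<times> 'a)^'m::finite"
    and \<rho> \<sigma> :: "complex^'a^'a"
  assumes tester: "is_tester T \<rho>"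
    and herm: "\<And>i. adj (H$i) = H$i"
    and c: "\<And>i. c i \<ge> 0" "\<And>i v. cmod (ip v ((H$i) *v v)) \<le> c i * Re (ip v ((T$i) *v v))"
    and sum: "(\<Sum>i\<in>UNIV. H$i) = id_tensor \<sigma>"
    and tr: "(\<Sum>a\<in>UNIV. \<sigma>$a$a) = 0"
    and e: "\<And>i. \<bar>e\<bar> * c i \<le> 1"
  shows "is_tester (T + e *\<^sub>R H) (\<rho> + e *\<^sub>R \<sigma>)"
proof -
  have T: "\<And>i. psd (T$i)" "density \<rho>" "(\<Sum>i\<in>UNIV. T$i) = id_tensor \<rho>"
    using tester unfolding is_tester_def by auto
  have P: "psd ((T + e *\<^sub>R H)$i)" for i
    using perturb_psd[OF T(1) herm c(1) c(2) e] by simp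
  have S: "(\<Sum>i\<in>UNIV. (T + e *\<^sub>R H)$i) = id_tensor (\<rho> + e *\<^sub>R \<sigma>)"
    by (simp add: sum.distrib scaleR_sum_right[symmetric] T(3) sum id_tensor_add id_tensor_scaleR)
  have "psd (id_tensor (\<rho> + e *\<^sub>R \<sigma>) :: complex^('b\<times>'a)^('b\<times>'a))"
    unfolding S[symmetric] by (rule psd_sum) (rule P)
  then have "psd (\<rho> + e *\<^sub>R \<sigma>)" by (rule id_tensor_psd)
  moreover have "(\<Sum>a\<in>UNIV. (\<rho> + e *\<^sub>R \<sigma>)$a$a) = 1"
    using T(2) tr by (simp add: density_def sum.distrib scaleR_sum_right[symmetric])
  ultimately have "density (\<rho> + e *\<^sub>R \<sigma>)" by (simp add: density_def)
  then show ?thesis using P S by (simp add: is_tester_def)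
qed

lemma no_perturb:
  fixes T H :: "complex^('b::finite \<times> 'a::finite)^('b \<times> 'a)^'m::finite"
    and \<rho> \<sigma> :: "complex^'a^'a"
  assumes tester: "is_tester T \<rho>"
    and ext: "T extreme_point_of testers"
    and herm: "\<And>i. adj (H$i) = H$i"
    and sand: "\<And>i. \<exists>Y. H$i = T$i ** Y ** T$i"
    and sum: "(\<Sum>i\<in>UNIV. H$i) = id_tensor \<sigma>"
    and tr: "(\<Sum>a\<in>UNIV. \<sigma>$a$a) = 0"
  shows "H = 0"
proof (rule ccontr)
  assume H0: "H \<noteq> 0"
  obtain Yf where Yf: "\<And>i. H$i = T$i ** Yf i ** T$i" using sand by metis
  have "\<forall>i. \<exists>c\<ge>0. \<forall>v. cmod (ip v ((H$i) *v v)) \<le> c * Re (ip v ((T$i) *v v))"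
  proof
    fix i
    have "psd (T$i)" using tester by (simp add: is_tester_def)
    from sandwich_qbound[OF this, of "Yf i"] show "\<exists>c\<ge>0. \<forall>v. cmod (ip v ((H$i) *v v)) \<le> c * Re (ip v ((T$i) *v v))"
      by (simp add: Yf[symmetric])
  qed
  then obtain c where c: "\<And>i. c i \<ge> 0" "\<And>i v. cmod (ip v ((H$i) *v v)) \<le> c i * Re (ip v ((T$i) *v v))"
    by metis
  define s where "s = (\<Sum>i\<in>UNIV. c i)"
  have s0: "0 \<le> s" unfolding s_def using c(1) by (simp add: sum_nonneg)
  define e where "e = 1 / (1 + s)"
  have epos: "e > 0" using s0 by (simp add: e_def)
  have ec: "\<bar>e\<bar> * c i \<le> 1" for i
  proof -
    have "c i \<le> s" unfolding s_def by (rule member_le_sum) (use c(1) in auto)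
    then have "c i \<le> 1 + s" by simp
    then show ?thesis using epos s0 by (simp add: e_def)
  qed
  have ec': "\<bar>-e\<bar> * c i \<le> 1" for i using ec[of i] by simp
  have a: "T + e *\<^sub>R H \<in> testers"
    using tester_perturb[OF tester herm c sum tr ec] unfolding testers_def by blast
  have b: "T + (-e) *\<^sub>R H \<in> testers"
    using tester_perturb[OF tester herm c sum tr ec'] unfolding testers_def by blast
  have mid: "midpoint (T + e *\<^sub>R H) (T + (-e) *\<^sub>R H) = T"
    by (rule midpoint_pm)
  have ne: "T + e *\<^sub>R H \<noteq> T + (-e) *\<^sub>R H"
  proof
    assume "T + e *\<^sub>R H = T + (-e) *\<^sub>R H"
    then have "e *\<^sub>R H = (-e) *\<^sub>R H" by simp
    then have "(e - (-e)) *\<^sub>R H = 0" by (metis scaleR_left_diff_distrib right_minus_eq)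
    then have "e - (-e) = 0 \<or> H = 0" by (simp only: scaleR_eq_0_iff)
    then show False using epos H0 by auto
  qed
  have "T \<in> open_segment (T + e *\<^sub>R H) (T + (-e) *\<^sub>R H)"
    using midpoint_in_open_segment[of "T + e *\<^sub>R H" "T + (-e) *\<^sub>R H"] ne unfolding mid by blast
  then show False using ext a b unfolding extreme_point_of_def by blast
qed



definition cv :: "complex^'n \<Rightarrow> complex^'n" where "cv v = (\<chi> j. cnj (v$j))"

lemma cv_cv[simp]: "cv (cv v) = v" by (simp add: cv_def vec_eq_iff)

lemma cv_sum_scale: "cv (\<Sum>x\<in>B. u x *s x) = (\<Sum>x\<in>B. cnj (u x) *s cv x)"
  by (simp add: cv_def vec_eq_iff sum_component)

lemma dim_cv_le: "vec.dim (cv ` S) \<le> vec.dim (S :: (complex^'n) set)"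
proof -
  obtain B where B: "B \<subseteq> S" "vec.independent B" "S \<subseteq> vec.span B" "card B = vec.dim S"
    using vec.basis_exists[of S] by blast
  have fB: "finite B" using B(2) vec.finiteI_independent by blast
  have "cv ` S \<subseteq> vec.span (cv ` B)"
  proof
    fix y assume "y \<in> cv ` S"
    then obtain x where x: "x \<in> S" "y = cv x" by blast
    then have "x \<in> range (\<lambda>u. \<Sum>v\<in>B. u v *s v)" using B(3) vec.span_finite[OF fB] by blast
    then obtain u where "x = (\<Sum>v\<in>B. u v *s v)" by blast
    then have "y = (\<Sum>v\<in>B. cnj (u v) *s cv v)" using x(2) cv_sum_scale by simp
    moreover have "(\<Sum>v\<in>B. cnj (u v) *s cv v) \<in> vec.span (cv ` B)"
      by (intro vec.span_sum vec.span_scale vec.span_base imageI)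
    ultimately show "y \<in> vec.span (cv ` B)" by simp
  qed
  then have "vec.dim (cv ` S) \<le> card (cv ` B)" by (rule vec.dim_le_card) (use fB in simp)
  also have "\<dots> \<le> card B" by (rule card_image_le[OF fB])
  finally show ?thesis using B(4) by simp
qed

lemma dim_cv: "vec.dim (cv ` S) = vec.dim (S :: (complex^'n) set)"
proof -
  have "vec.dim (cv ` (cv ` S)) \<le> vec.dim (cv ` S)" by (rule dim_cv_le)
  moreover have "cv ` (cv ` S) = S" by (force simp: image_image)
  ultimately show ?thesis using dim_cv_le[of S] by simp
qed

definition cconj :: "complex^'n^'m \<Rightarrow> complex^'n^'m" where "cconj A = (\<chi> i j. cnj (A$i$j))"

lemma rank_cconj: "rank (cconj A) = rank A"
proof -
  have "rows (cconj A) = cv ` rows A"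
    by (auto simp: rows_def row_def cconj_def cv_def)
  then show ?thesis unfolding row_rank_def_gen by (simp add: dim_cv)
qed

lemma herm_transpose: "adj A = A \<Longrightarrow> transpose A = cconj A"
  by (auto simp: adj_def transpose_def cconj_def vec_eq_iff)

lemma rank_transpose_herm: "adj A = A \<Longrightarrow> rank (transpose A) = rank A"
  by (simp add: herm_transpose rank_cconj)



definition fl :: "complex^'n^'k \<Rightarrow> complex^('k \<times> 'n)" where
  "fl M = (\<chi> p. M $ fst p $ snd p)"

definition outer :: "complex^'k \<Rightarrow> complex^'n \<Rightarrow> complex^'n^'k" where
  "outer u v = (\<chi> i j. u$i * v$j)"

definition g2 :: "(complex^'k) \<times> (complex^'n) \<Rightarrow> complex^('k \<times> 'n)" where
  "g2 p = fl (outer (fst p) (snd p))"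

lemma g2_comp: "g2 (u,v) $ (i,j) = u$i * v$j"
  by (simp add: g2_def fl_def outer_def)

lemma indep_sum_zero:
  assumes "vec.independent B" "(\<Sum>v\<in>B. c v *s v) = (0::complex^'n)" "v \<in> B"
  shows "c v = 0"
  using assms vec.independent_explicit by blast

lemma outer_indep:
  fixes BC :: "(complex^'k) set" and BR :: "(complex^'n) set"
  assumes iC: "vec.independent BC" and iR: "vec.independent BR"
    and z: "(\<Sum>p\<in>BC \<times> BR. c p *s g2 p) = 0" and p: "p \<in> BC \<times> BR"
  shows "c p = 0"
proof -
  have fC: "finite BC" using iC vec.finiteI_independent by blast
  have fR: "finite BR" using iR vec.finiteI_independent by blast
  have comp: "(\<Sum>u\<in>BC. \<Sum>v\<in>BR. c (u,v) * (u$i * v$j)) = 0" for i j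
  proof -
    have "(\<Sum>p\<in>BC \<times> BR. c p *s g2 p) $ (i,j) = 0" using z by simp
    then have "(\<Sum>p\<in>BC \<times> BR. c p * (g2 p $ (i,j))) = 0" by (simp add: sum_component)
    then show ?thesis by (simp add: sum.cartesian_product g2_def fl_def outer_def case_prod_beta)
  qed
  have d0: "(\<Sum>u\<in>BC. c (u,v) * u$i) = 0" if v: "v \<in> BR" for i v
  proof -
    have "(\<Sum>v\<in>BR. (\<Sum>u\<in>BC. c (u,v) * u$i) *s v) = 0"
    proof -
      have "(\<Sum>v\<in>BR. (\<Sum>u\<in>BC. c (u,v) * u$i) *s v) $ j = 0" for j
      proof -
        have "(\<Sum>v\<in>BR. (\<Sum>u\<in>BC. c (u,v) * u$i) *s v) $ j = (\<Sum>v\<in>BR. \<Sum>u\<in>BC. c (u,v) * (u$i * v$j))"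
          by (simp add: sum_component sum_distrib_right mult.assoc)
        also have "\<dots> = (\<Sum>u\<in>BC. \<Sum>v\<in>BR. c (u,v) * (u$i * v$j))" by (rule sum.swap)
        finally show ?thesis using comp by simp
      qed
      then show ?thesis by (simp add: vec_eq_iff)
    qed
    from indep_sum_zero[OF iR this v] show ?thesis by simp
  qed
  obtain u v where uv: "p = (u,v)" "u \<in> BC" "v \<in> BR" using p by blast
  have "(\<Sum>u\<in>BC. c (u,v) *s u) = 0"
    using d0[OF uv(3)] by (simp add: vec_eq_iff sum_component mult.commute)
  then have "c (u,v) = 0" using indep_sum_zero[OF iC _ uv(2), of "\<lambda>u. c (u,v)"] by blast
  then show ?thesis using uv by simp
qed

lemma outer_inj:
  fixes BC :: "(complex^'k) set" and BR :: "(complex^'n) set"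
  assumes iC: "vec.independent BC" and iR: "vec.independent BR"
  shows "inj_on g2 (BC \<times> BR)"
proof (rule inj_onI, rule ccontr)
  fix p q assume p: "p \<in> BC \<times> BR" and q: "q \<in> BC \<times> BR" and e: "g2 p = g2 q" and ne: "p \<noteq> q"
  have fC: "finite BC" using iC vec.finiteI_independent by blast
  have fR: "finite BR" using iR vec.finiteI_independent by blast
  define c where "c x = (if x = p then 1 else 0) - (if x = q then 1 else (0::complex))" for x
  have "(\<Sum>x\<in>BC \<times> BR. c x *s g2 x) = (\<Sum>x\<in>BC \<times> BR. (if x = p then g2 x else 0)) - (\<Sum>x\<in>BC \<times> BR. (if x = q then g2 x else 0))"
    unfolding c_def by (simp add: vector_sub_rdistrib sum_subtractf if_distrib[of "\<lambda>a. a *s _"] cong: if_cong)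
  also have "\<dots> = 0" using p q e fC fR by simp
  finally have "c p = 0" using outer_indep[OF iC iR _ p] by blast
  then show False using ne by (simp add: c_def)
qed

lemma outer_indep_image:
  fixes BC :: "(complex^'k) set" and BR :: "(complex^'n) set"
  assumes iC: "vec.independent BC" and iR: "vec.independent BR"
  shows "vec.independent (g2 ` (BC \<times> BR))"
proof -
  have fC: "finite BC" using iC vec.finiteI_independent by blast
  have fR: "finite BR" using iR vec.finiteI_independent by blast
  have inj: "inj_on g2 (BC \<times> BR)" by (rule outer_inj[OF iC iR])
  show ?thesis unfolding vec.independent_explicit
  proof (intro conjI allI impI ballI)
    show "finite (g2 ` (BC \<times> BR))" using fC fR by simp
  next
    fix c x assume z: "(\<Sum>v\<in>g2 ` (BC \<times> BR). c v *s v) = 0" and x: "x \<in> g2 ` (BC \<times> BR)"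
    have "(\<Sum>p\<in>BC \<times> BR. c (g2 p) *s g2 p) = 0" using z by (simp add: sum.reindex[OF inj])
    moreover obtain p where "p \<in> BC \<times> BR" "x = g2 p" using x by blast
    ultimately show "c x = 0" using outer_indep[OF iC iR, of "\<lambda>p. c (g2 p)"] by blast
  qed
qed



definition sandw :: "complex^'p^'k \<Rightarrow> complex^'n^'q \<Rightarrow> (complex^('k\<times>'n)) set" where
  "sandw A B = range (\<lambda>Y :: complex^'q^'p. fl (A ** Y ** B))"

lemma row_transpose_comp: "row k (transpose A) $ i = A $ i $ k"
  by (simp add: row_def transpose_def)

lemma row_comp: "row l B $ j = B $ l $ j"
  by (simp add: row_def)

lemma column_comp: "column k A $ i = A $ i $ k"
  by (simp add: column_def)

lemma sum_delta_mult2: "(\<Sum>a\<in>UNIV. (if a = k then c else 0) * f a) = (c * f k :: complex)"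
  for k :: "'a::finite"
proof -
  have "\<And>a. (if a = k then c else 0) * f a = (if a = k then c * f k else 0)" by simp
  then show ?thesis by simp
qed

lemma sum_delta_mult: "(\<Sum>a\<in>UNIV. f a * (if a = k then 1 else 0)) = (f k :: complex)"
  for k :: "'a::finite"
proof -
  have "\<And>a. f a * (if a = k then 1 else 0) = (if a = k then f k else 0)" by simp
  then show ?thesis by simp
qed

lemma mat_unit_sandwich:
  fixes A :: "complex^'p^'k" and B :: "complex^'n^'q"
  shows "(A ** (\<chi> a b. if a = k \<and> b = l then 1 else 0) ** B) $ i $ j = A$i$k * B$l$j"
proof -
  have "(A ** (\<chi> a b. if a = k \<and> b = l then 1 else (0::complex))) $ i $ c = (if c = l then A$i$k else 0)" for c
  proof -
    show ?thesis by (cases "c = l") (simp_all add: matrix_matrix_mult_def sum_delta_mult)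
  qed
  then have "(A ** (\<chi> a b. if a = k \<and> b = l then 1 else (0::complex)) ** B) $ i $ j
      = (\<Sum>c\<in>UNIV. if c = l then A$i$k * B$c$j else 0)"
    unfolding matrix_matrix_mult_def[of "A ** _" B] by (simp add: sum_delta_mult2)
  also have "\<dots> = A$i$k * B$l$j" by simp
  finally show ?thesis .
qed

lemma g2_in_sandw:
  fixes A :: "complex^'p^'k" and B :: "complex^'n^'q"
  assumes "u \<in> rows (transpose A)" "v \<in> rows B"
  shows "g2 (u,v) \<in> sandw A B"
proof -
  obtain k where k: "u = row k (transpose A)" using assms(1) by (auto simp: rows_def)
  obtain l where l: "v = row l B" using assms(2) by (auto simp: rows_def)
  have "g2 (u,v) = fl (A ** (\<chi> a b. if a = k \<and> b = l then 1 else 0) ** B)"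
    unfolding vec_eq_iff
  proof
    fix p :: "'k \<times> 'n"
    obtain i j where p: "p = (i,j)" by (cases p)
    show "g2 (u,v) $ p = fl (A ** (\<chi> a b. if a = k \<and> b = l then 1 else 0) ** B) $ p"
      unfolding p g2_comp by (simp add: fl_def mat_unit_sandwich k l row_transpose_comp row_comp column_comp)
  qed
  then show ?thesis unfolding sandw_def by blast
qed

lemma g2_span:
  fixes BC :: "(complex^'k) set" and BR :: "(complex^'n) set"
  assumes fC: "finite BC" and fR: "finite BR"
    and u: "u \<in> vec.span BC" and v: "v \<in> vec.span BR"
  shows "g2 (u,v) \<in> vec.span (g2 ` (BC \<times> BR))"
proof -
  obtain a where a: "u = (\<Sum>x\<in>BC. a x *s x)" using u vec.span_finite[OF fC] by blast
  obtain b where b: "v = (\<Sum>y\<in>BR. b y *s y)" using v vec.span_finite[OF fR] by blast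
  have "g2 (u,v) = (\<Sum>x\<in>BC. \<Sum>y\<in>BR. (a x * b y) *s g2 (x,y))"
    unfolding vec_eq_iff
  proof
    fix p :: "'k \<times> 'n"
    obtain i j where p: "p = (i,j)" by (cases p)
    have "g2 (u,v) $ p = (\<Sum>x\<in>BC. a x * x$i) * (\<Sum>y\<in>BR. b y * y$j)"
      by (simp add: p g2_comp a b sum_component)
    also have "\<dots> = (\<Sum>x\<in>BC. \<Sum>y\<in>BR. (a x * x$i) * (b y * y$j))" by (rule sum_product)
    also have "\<dots> = (\<Sum>x\<in>BC. \<Sum>y\<in>BR. (a x * b y) *s g2 (x,y)) $ p"
      by (simp add: p g2_comp sum_component mult_ac)
    finally show "g2 (u,v) $ p = (\<Sum>x\<in>BC. \<Sum>y\<in>BR. (a x * b y) *s g2 (x,y)) $ p" .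
  qed
  also have "\<dots> \<in> vec.span (g2 ` (BC \<times> BR))"
    by (intro vec.span_sum vec.span_scale vec.span_base) auto
  finally show ?thesis .
qed

lemma sandw_expand:
  fixes A :: "complex^'p^'k" and B :: "complex^'n^'q" and Y :: "complex^'q^'p"
  shows "fl (A ** Y ** B) = (\<Sum>k\<in>UNIV. \<Sum>l\<in>UNIV. Y$k$l *s g2 (row k (transpose A), row l B))"
  unfolding vec_eq_iff
proof
  fix p :: "'k \<times> 'n"
  obtain i j where p: "p = (i,j)" by (cases p)
  have "fl (A ** Y ** B) $ p = (\<Sum>l\<in>UNIV. (\<Sum>k\<in>UNIV. A$i$k * Y$k$l) * B$l$j)"
    by (simp add: p fl_def matrix_matrix_mult_def)
  also have "\<dots> = (\<Sum>l\<in>UNIV. \<Sum>k\<in>UNIV. A$i$k * Y$k$l * B$l$j)"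
    by (simp only: sum_distrib_right)
  also have "\<dots> = (\<Sum>l\<in>UNIV. \<Sum>k\<in>UNIV. Y$k$l * (A$i$k * B$l$j))"
    by (simp add: mult_ac)
  also have "\<dots> = (\<Sum>k\<in>UNIV. \<Sum>l\<in>UNIV. Y$k$l * (A$i$k * B$l$j))" by (rule sum.swap)
  also have "\<dots> = (\<Sum>k\<in>UNIV. \<Sum>l\<in>UNIV. Y$k$l *s g2 (row k (transpose A), row l B)) $ p"
    by (simp add: p sum_component g2_comp row_transpose_comp row_comp column_comp)
  finally show "fl (A ** Y ** B) $ p = (\<Sum>k\<in>UNIV. \<Sum>l\<in>UNIV. Y$k$l *s g2 (row k (transpose A), row l B)) $ p" .
qed

lemma sandw_dim:
  fixes A :: "complex^'p^'k" and B :: "complex^'n^'q"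
  shows "vec.dim (sandw A B) = rank (transpose A) * rank B"
proof -
  obtain BC where BC: "BC \<subseteq> rows (transpose A)" "vec.independent BC" "rows (transpose A) \<subseteq> vec.span BC"
    "card BC = vec.dim (rows (transpose A))"
    using vec.basis_exists by blast
  obtain BR where BR: "BR \<subseteq> rows B" "vec.independent BR" "rows B \<subseteq> vec.span BR"
    "card BR = vec.dim (rows B)"
    using vec.basis_exists by blast
  have fC: "finite BC" using BC(2) vec.finiteI_independent by blast
  have fR: "finite BR" using BR(2) vec.finiteI_independent by blast
  let ?P = "g2 ` (BC \<times> BR)"
  have cardP: "card ?P = rank (transpose A) * rank B"
    using card_image[OF outer_inj[OF BC(2) BR(2)]] BC(4) BR(4)
    by (simp add: card_cartesian_product row_rank_def_gen)
  have "?P \<subseteq> sandw A B" using g2_in_sandw BC(1) BR(1) by blast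
  then have le: "card ?P \<le> vec.dim (sandw A B)"
    by (rule vec.independent_card_le_dim) (rule outer_indep_image[OF BC(2) BR(2)])
  have "sandw A B \<subseteq> vec.span ?P"
  proof
    fix x assume "x \<in> sandw A B"
    then obtain Y where Y: "x = fl (A ** Y ** B)" by (auto simp: sandw_def)
    have "row k (transpose A) \<in> vec.span BC" for k using BC(3) by (auto simp: rows_def)
    moreover have "row l B \<in> vec.span BR" for l using BR(3) by (auto simp: rows_def)
    ultimately have "g2 (row k (transpose A), row l B) \<in> vec.span ?P" for k l
      using g2_span[OF fC fR] by blast
    then show "x \<in> vec.span ?P" unfolding Y sandw_expand
      by (intro vec.span_sum vec.span_scale)
  qed
  then have "vec.dim (sandw A B) \<le> card ?P" by (rule vec.dim_le_card) (use fC fR in simp)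
  with le cardP show ?thesis by simp
qed

lemma subspace_sandw: "vec.subspace (sandw A B)"
  unfolding vec.subspace_def sandw_def
proof (intro conjI ballI allI)
  show "0 \<in> range (\<lambda>Y. fl (A ** Y ** B))"
    by (rule image_eqI[of _ _ 0]) (auto simp: fl_def vec_eq_iff matrix_matrix_mult_def)
next
  fix x y assume "x \<in> range (\<lambda>Y. fl (A ** Y ** B))" "y \<in> range (\<lambda>Y. fl (A ** Y ** B))"
  then obtain X Y where "x = fl (A ** X ** B)" "y = fl (A ** Y ** B)" by blast
  then show "x + y \<in> range (\<lambda>Y. fl (A ** Y ** B))"
    by (intro image_eqI[of _ _ "X + Y"]) (simp_all add: fl_def vec_eq_iff matrix_matrix_mult_def sum.distrib distrib_left distrib_right)
next
  fix c x assume "x \<in> range (\<lambda>Y. fl (A ** Y ** B))"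
  then obtain X where X: "x = fl (A ** X ** B)" by blast
  show "c *s x \<in> range (\<lambda>Y. fl (A ** Y ** B))"
  proof (intro image_eqI[of _ _ "\<chi> i j. c * X$i$j"])
    show "c *s x = fl (A ** (\<chi> i j. c * X$i$j) ** B)"
      by (simp add: X fl_def vec_eq_iff matrix_matrix_mult_def sum_distrib_left sum_distrib_right mult_ac)
  qed simp
qed



lemma factor_kernel:
  fixes Q T :: "complex^'n^'n"
  assumes ker: "\<And>x. Q *v x = 0 \<Longrightarrow> T *v x = 0"
  shows "\<exists>Z. T = Z ** Q"
proof -
  obtain B where B: "B \<subseteq> range ((*v) Q)" "vec.independent B" "range ((*v) Q) \<subseteq> vec.span B"
    "card B = vec.dim (range ((*v) Q))"
    by (rule vec.basis_exists)
  have fB: "finite B" by (rule vec.finiteI_independent[OF B(2)])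
  define pre where "pre b = (SOME x. Q *v x = b)" for b
  have pre: "Q *v pre b = b" if "b \<in> B" for b
  proof -
    have "\<exists>x. Q *v x = b" using B(1) that by auto
    then show ?thesis unfolding pre_def by (rule someI_ex)
  qed
  have "\<exists>h. Vector_Spaces.linear (*s) (*s) h \<and> (\<forall>b\<in>B. h b = T *v pre b)"
    by (rule vec.linear_independent_extend[OF B(2)])
  then obtain h where h: "Vector_Spaces.linear (*s) (*s) h" "\<forall>b\<in>B. h b = T *v pre b"
    by blast
  have hx: "h (Q *v x) = T *v x" for x
  proof -
    have "Q *v x \<in> vec.span B" by (rule subsetD[OF B(3) rangeI])
    then have "Q *v x \<in> range (\<lambda>u. \<Sum>b\<in>B. u b *s b)" by (simp only: vec.span_finite[OF fB])
    then obtain c where c: "Q *v x = (\<Sum>b\<in>B. c b *s b)" by (rule rangeE)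
    define y where "y = (\<Sum>b\<in>B. c b *s pre b)"
    have Qy: "Q *v y = Q *v x"
      unfolding y_def c by (simp add: vec.linear_sum[OF matrix_vector_mul_linear_gen] mv_scale pre)
    have "Q *v (x - y) = 0" using Qy by (simp add: matrix_vector_mult_diff_distrib)
    then have "T *v (x - y) = 0" by (rule ker)
    then have Tx: "T *v x = T *v y" by (simp add: matrix_vector_mult_diff_distrib)
    have "h (Q *v x) = (\<Sum>b\<in>B. c b *s h b)"
      unfolding c by (simp add: vec.linear_sum[OF h(1)] vec.linear_scale[OF h(1)])
    also have "\<dots> = T *v y"
      unfolding y_def by (simp add: vec.linear_sum[OF matrix_vector_mul_linear_gen] mv_scale h(2))
    finally show ?thesis using Tx by simp
  qed
  have "T = matrix h ** Q"
    unfolding matrix_eq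
    by (simp add: matrix_vector_mul_assoc[symmetric] matrix_works[OF h(1)] hx)
  then show ?thesis by blast
qed


lemma psd_kernel_sum:
  fixes T :: "complex^'n^'n^'m::finite"
  assumes "\<And>i. psd (T$i)" and "(\<Sum>i\<in>UNIV. T$i) *v x = 0"
  shows "T$i *v x = 0"
proof -
  have "(\<Sum>j\<in>UNIV. ip x (T$j *v x)) = 0"
    using assms(2) by (simp add: sum_mv ip_sum_right[symmetric])
  then have "(\<Sum>j\<in>UNIV. Re (ip x (T$j *v x))) = 0" by (metis Re_sum zero_complex.sel(1))
  moreover have "\<And>j. 0 \<le> Re (ip x (T$j *v x))" using assms(1) by (simp add: psd_ip)
  ultimately have "\<forall>j\<in>UNIV. Re (ip x (T$j *v x)) = 0" by (subst (asm) sum_nonneg_eq_0_iff) auto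
  then show ?thesis using psd_kernel[OF assms(1)] by blast
qed



lemma family_indep_image:
  fixes g :: "'p \<Rightarrow> complex^'k"
  assumes fX: "finite X"
    and ind: "\<And>c p. (\<Sum>q\<in>X. c q *s g q) = 0 \<Longrightarrow> p \<in> X \<Longrightarrow> c p = 0"
  shows "inj_on g X" "vec.independent (g ` X)"
proof -
  show inj: "inj_on g X"
  proof (rule inj_onI, rule ccontr)
    fix p q assume p: "p \<in> X" and q: "q \<in> X" and e: "g p = g q" and ne: "p \<noteq> q"
    define c where "c x = (if x = p then 1 else 0) - (if x = q then 1 else (0::complex))" for x
    have "(\<Sum>x\<in>X. c x *s g x) = (\<Sum>x\<in>X. (if x = p then g x else 0)) - (\<Sum>x\<in>X. (if x = q then g x else 0))"
      unfolding c_def by (simp add: vector_sub_rdistrib sum_subtractf if_distrib[of "\<lambda>a. a *s _"] cong: if_cong)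
    also have "\<dots> = 0" using p q e fX by simp
    finally have "c p = 0" using ind p by blast
    then show False using ne by (simp add: c_def)
  qed
  show "vec.independent (g ` X)" unfolding vec.independent_explicit
  proof (intro conjI allI impI ballI)
    show "finite (g ` X)" using fX by simp
  next
    fix c x assume z: "(\<Sum>v\<in>g ` X. c v *s v) = 0" and x: "x \<in> g ` X"
    have "(\<Sum>p\<in>X. c (g p) *s g p) = 0" using z by (simp add: sum.reindex[OF inj])
    moreover obtain p where "p \<in> X" "x = g p" using x by blast
    ultimately show "c x = 0" using ind[of "\<lambda>p. c (g p)"] by blast
  qed
qed

lemma dim_Int_ge:
  fixes S T :: "(complex^'k) set"
  assumes "vec.subspace S" "vec.subspace T"
  shows "vec.dim S + vec.dim T \<le> vec.dim (S \<inter> T) + CARD('k)"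
  using vec.dim_sums_Int[OF assms] dim_subset_UNIV_cart_gen[of "{x + y |x y. x \<in> S \<and> y \<in> T}"]
  by linarith

definition trz :: "complex^('a::finite\<times>'a) \<Rightarrow> complex" where "trz z = (\<Sum>a\<in>UNIV. z$(a,a))"

lemma subspace_trz: "vec.subspace {z :: complex^('a::finite\<times>'a). trz z = 0}"
  unfolding vec.subspace_def trz_def
  by (auto simp: sum.distrib sum_distrib_left[symmetric])

lemma dim_trz: "CARD('a::finite\<times>'a) \<le> vec.dim {z :: complex^('a\<times>'a). trz z = 0} + 1"
proof -
  obtain a0 :: 'a where True by blast
  define e :: "complex^('a\<times>'a)" where "e = axis (a0,a0) 1"
  have te: "trz e = 1"
  proof -
    have "trz e = (\<Sum>a\<in>UNIV. if a = a0 then 1 else 0)"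
      unfolding trz_def e_def by (rule sum.cong) (auto simp: axis_def)
    then show ?thesis by simp
  qed
  let ?H = "{z :: complex^('a\<times>'a). trz z = 0}"
  have sH: "vec.subspace ?H" by (rule subspace_trz)
  have sE: "vec.subspace (vec.span {e})" by simp
  have U: "{x + y |x y. x \<in> ?H \<and> y \<in> vec.span {e}} = UNIV"
  proof -
    have "z \<in> {x + y |x y. x \<in> ?H \<and> y \<in> vec.span {e}}" for z
    proof -
      have "trz (z - trz z *s e) = 0"
        using te by (simp add: trz_def sum_subtractf sum_distrib_left[symmetric])
      moreover have "trz z *s e \<in> vec.span {e}" by (intro vec.span_scale vec.span_base) simp
      ultimately show ?thesis by (intro CollectI exI[of _ "z - trz z *s e"] exI[of _ "trz z *s e"]) auto
    qed
    then show ?thesis by auto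
  qed
  have "vec.dim (UNIV :: (complex^('a\<times>'a)) set) + vec.dim (?H \<inter> vec.span {e}) = vec.dim ?H + vec.dim (vec.span {e})"
    using vec.dim_sums_Int[OF sH sE] unfolding U .
  moreover have "vec.dim (vec.span {e}) \<le> 1"
    by (simp add: vec.dim_span)
  moreover have "vec.dim (UNIV :: (complex^('a\<times>'a)) set) = CARD('a\<times>'a)" by (rule vec_dim_card)
  ultimately show ?thesis by linarith
qed

lemma dim_Int_trz:
  fixes Z :: "(complex^('a::finite\<times>'a)) set"
  assumes "vec.subspace Z"
  shows "vec.dim Z \<le> vec.dim (Z \<inter> {z. trz z = 0}) + 1"
  using dim_Int_ge[OF assms subspace_trz] dim_trz[where 'a='a] by linarith



definition embR :: "'b::finite \<Rightarrow> complex^'a \<Rightarrow> complex^('b\<times>'a)" where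
  "embR b v = (\<chi> p. if fst p = b then v$(snd p) else 0)"

lemma embR_sum_scale: "embR b (\<Sum>x\<in>B. u x *s x) = (\<Sum>x\<in>B. u x *s embR b x)"
  by (simp add: embR_def vec_eq_iff sum_component if_distrib cong: if_cong)

lemma rank_id_tensor_le:
  fixes \<rho> :: "complex^'a::finite^'a"
  shows "rank (id_tensor \<rho> :: complex^('b::finite\<times>'a)^('b\<times>'a)) \<le> CARD('b) * rank \<rho>"
proof -
  obtain BR where BR: "BR \<subseteq> rows \<rho>" "vec.independent BR" "rows \<rho> \<subseteq> vec.span BR" "card BR = vec.dim (rows \<rho>)"
    by (rule vec.basis_exists)
  have fR: "finite BR" by (rule vec.finiteI_independent[OF BR(2)])
  let ?P = "\<Union>b\<in>(UNIV::'b set). embR b ` BR"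
  have "rows (id_tensor \<rho> :: complex^('b\<times>'a)^('b\<times>'a)) \<subseteq> vec.span ?P"
  proof
    fix r assume "r \<in> rows (id_tensor \<rho> :: complex^('b\<times>'a)^('b\<times>'a))"
    then obtain p where p: "r = row p (id_tensor \<rho> :: complex^('b\<times>'a)^('b\<times>'a))" by (auto simp: rows_def)
    obtain b a where ba: "p = (b,a)" by (cases p)
    have r: "r = embR b (row a \<rho>)"
      by (simp add: p ba row_def id_tensor_def embR_def vec_eq_iff)
    have "row a \<rho> \<in> vec.span BR" using BR(3) by (auto simp: rows_def)
    then have "row a \<rho> \<in> range (\<lambda>u. \<Sum>x\<in>BR. u x *s x)" by (simp only: vec.span_finite[OF fR])
    then obtain u where u: "row a \<rho> = (\<Sum>x\<in>BR. u x *s x)" by (rule rangeE)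
    have "(\<Sum>x\<in>BR. u x *s embR b x) \<in> vec.span ?P"
      by (intro vec.span_sum vec.span_scale vec.span_base) auto
    then show "r \<in> vec.span ?P" unfolding r u embR_sum_scale .
  qed
  then have "vec.dim (rows (id_tensor \<rho> :: complex^('b\<times>'a)^('b\<times>'a))) \<le> card ?P"
    by (rule vec.dim_le_card) (use fR in simp)
  also have "\<dots> \<le> (\<Sum>b\<in>(UNIV::'b set). card (embR b ` BR))" by (rule card_UN_le) simp
  also have "\<dots> \<le> (\<Sum>b\<in>(UNIV::'b set). card BR)" by (intro sum_mono card_image_le fR)
  also have "\<dots> = CARD('b) * rank \<rho>" using BR(4) by (simp add: row_rank_def_gen)
  finally show ?thesis by (simp add: row_rank_def_gen)
qed

definition slc :: "'m::finite \<Rightarrow> complex^('m\<times>'k) \<Rightarrow> complex^'k::finite" where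
  "slc i x = (\<chi> p. x$(i,p))"

definition emb :: "'m::finite \<Rightarrow> complex^'k::finite \<Rightarrow> complex^('m\<times>'k)" where
  "emb i z = (\<chi> q. if fst q = i then z$(snd q) else 0)"

lemma slc_emb: "slc j (emb i z) = (if j = i then z else 0)"
  by (simp add: slc_def emb_def vec_eq_iff)

lemma slc_add: "slc i (x + y) = slc i x + slc i y" by (simp add: slc_def vec_eq_iff)
lemma slc_scale: "slc i (c *s x) = c *s slc i x" by (simp add: slc_def vec_eq_iff)
lemma slc_zero: "slc i 0 = 0" by (simp add: slc_def vec_eq_iff)
lemma slc_diff: "slc i (x - y) = slc i x - slc i y" by (simp add: slc_def vec_eq_iff)

lemma subspace_block:
  assumes "\<And>i. vec.subspace (S i)"
  shows "vec.subspace {x. \<forall>i. slc i x \<in> S i}"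
  using assms unfolding vec.subspace_def
  by (auto simp: slc_add slc_scale slc_zero)

lemma block_dim:
  fixes S :: "'m::finite \<Rightarrow> (complex^'k::finite) set"
  assumes sub: "\<And>i. vec.subspace (S i)"
  shows "(\<Sum>i\<in>UNIV. vec.dim (S i)) \<le> vec.dim {x. \<forall>i. slc i x \<in> S i}"
proof -
  have "\<forall>i. \<exists>B. B \<subseteq> S i \<and> vec.independent B \<and> card B = vec.dim (S i)"
  proof
    fix i
    obtain B where "B \<subseteq> S i" "vec.independent B" "S i \<subseteq> vec.span B" "card B = vec.dim (S i)"
      by (rule vec.basis_exists)
    then show "\<exists>B. B \<subseteq> S i \<and> vec.independent B \<and> card B = vec.dim (S i)" by blast
  qed
  from choice[OF this] obtain Bf where Bf: "\<And>i. Bf i \<subseteq> S i" "\<And>i. vec.independent (Bf i)"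
    "\<And>i. card (Bf i) = vec.dim (S i)" by blast
  have fB: "\<And>i. finite (Bf i)" using Bf(2) vec.finiteI_independent by blast
  define X where "X = Sigma (UNIV::'m set) Bf"
  have fX: "finite X" unfolding X_def using fB by simp
  define g where "g p = emb (fst p) (snd p)" for p :: "'m \<times> (complex^'k)"
  have ind: "c p = 0" if z: "(\<Sum>q\<in>X. c q *s g q) = 0" and p: "p \<in> X" for c p
  proof -
    obtain j b where jb: "p = (j,b)" "b \<in> Bf j" using p unfolding X_def by blast
    have "(\<Sum>b\<in>Bf j. c (j,b) *s b) = 0"
    proof -
      have "slc j (\<Sum>q\<in>X. c q *s g q) = 0" using z by (simp add: slc_zero)
      moreover have "slc j (\<Sum>q\<in>X. c q *s g q) = (\<Sum>q\<in>X. c q *s slc j (g q))"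
        by (simp add: slc_def vec_eq_iff sum_component)
      moreover have "(\<Sum>q\<in>X. c q *s slc j (g q)) = (\<Sum>i\<in>UNIV. \<Sum>b\<in>Bf i. c (i,b) *s (if j = i then b else 0))"
        unfolding X_def g_def using fB by (simp add: sum.Sigma slc_emb split_def)
      moreover have "(\<Sum>i\<in>UNIV. \<Sum>b\<in>Bf i. c (i,b) *s (if j = i then b else 0)) = (\<Sum>b\<in>Bf j. c (j,b) *s b)"
      proof -
        have "(\<Sum>i\<in>UNIV. \<Sum>b\<in>Bf i. c (i,b) *s (if j = i then b else 0)) = (\<Sum>i\<in>UNIV. if i = j then (\<Sum>b\<in>Bf j. c (j,b) *s b) else 0)"
          by (rule sum.cong) auto
        then show ?thesis by simp
      qed
      ultimately show ?thesis by simp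
    qed
    then show ?thesis using indep_sum_zero[OF Bf(2) _ jb(2), of "\<lambda>b. c (j,b)"] jb(1) by simp
  qed
  have inj: "inj_on g X"
    by (rule family_indep_image(1)[OF fX]) (erule ind, assumption)
  have indep: "vec.independent (g ` X)"
    by (rule family_indep_image(2)[OF fX]) (erule ind, assumption)
  have sub2: "g ` X \<subseteq> {x. \<forall>i. slc i x \<in> S i}"
  proof
    fix x assume "x \<in> g ` X"
    then obtain j b where x: "x = emb j b" "b \<in> Bf j" unfolding X_def g_def by auto
    have "slc i x \<in> S i" for i
      using Bf(1)[of j] x vec.subspace_0[OF sub[of i]] by (auto simp: slc_emb)
    then show "x \<in> {x. \<forall>i. slc i x \<in> S i}" by blast
  qed
  have "card (g ` X) = (\<Sum>i\<in>UNIV. vec.dim (S i))"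
    using card_image[OF inj] fB Bf(3) by (simp add: X_def)
  moreover have "card (g ` X) \<le> vec.dim {x. \<forall>i. slc i x \<in> S i}"
    by (rule vec.independent_card_le_dim[OF sub2 indep])
  ultimately show ?thesis by simp
qed



lemma mk_linear:
  fixes f :: "complex^'k \<Rightarrow> complex^'l"
  assumes "\<And>x y. f (x + y) = f x + f y" "\<And>c x. f (c *s x) = c *s f x"
  shows "Vector_Spaces.linear (*s) (*s) f"
  unfolding Vector_Spaces.linear_iff using assms by (simp add: vec.vector_space_axioms)

definition unfl :: "complex^('k \<times> 'n) \<Rightarrow> complex^'n^'k" where
  "unfl z = (\<chi> i j. z$(i,j))"

lemma fl_unfl[simp]: "fl (unfl z) = z" by (simp add: fl_def unfl_def vec_eq_iff)
lemma unfl_fl[simp]: "unfl (fl M) = M" by (simp add: fl_def unfl_def vec_eq_iff)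
lemma unfl_add: "unfl (x + y) = unfl x + unfl y" by (simp add: unfl_def vec_eq_iff)
lemma unfl_sum: "unfl (sum f S) = (\<Sum>i\<in>S. unfl (f i))"
  by (induction S rule: infinite_finite_induct) (auto simp: unfl_add unfl_def vec_eq_iff)
lemma fl_zero[simp]: "fl 0 = 0" by (simp add: fl_def vec_eq_iff)

definition msc :: "complex \<Rightarrow> complex^'n^'k \<Rightarrow> complex^'n^'k" where
  "msc c M = (\<chi> i j. c * M$i$j)"

lemma msc_left: "A ** msc c Y = msc c (A ** Y)"
  by (simp add: msc_def vec_eq_iff matrix_matrix_mult_def sum_distrib_left mult.assoc mult.left_commute)

lemma msc_right: "msc c X ** B = msc c (X ** B)"
  by (simp add: msc_def vec_eq_iff matrix_matrix_mult_def sum_distrib_left mult.assoc mult.left_commute)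

lemma msc_sand: "msc c (A ** Y ** B) = A ** msc c Y ** B"
  by (simp add: msc_left msc_right)

lemma msc_sum: "msc c (sum f S) = (\<Sum>i\<in>S. msc c (f i))"
  by (induction S rule: infinite_finite_induct) (auto simp: msc_def vec_eq_iff distrib_left)

lemma id_tensor_msc: "id_tensor (msc c \<sigma>) = (msc c (id_tensor \<sigma>) :: complex^('b::finite\<times>'a::finite)^('b\<times>'a))"
  by (simp add: id_tensor_def msc_def vec_eq_iff mult_ac)

lemma adj_id_tensor: "adj (id_tensor \<sigma>) = (id_tensor (adj \<sigma>) :: complex^('b::finite\<times>'a::finite)^('b\<times>'a))"
  by (auto simp: id_tensor_def adj_def vec_eq_iff)

lemma sand_add: "A ** Y ** B + A ** Y' ** B = A ** (Y + Y') ** B"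
  by (simp add: vec_eq_iff matrix_matrix_mult_def sum.distrib distrib_left distrib_right)

lemma id_tensor_mult: "id_tensor A ** id_tensor B = (id_tensor (A ** B) :: complex^('b::finite\<times>'a::finite)^('b\<times>'a))"
proof -
  have "(id_tensor A ** id_tensor B :: complex^('b\<times>'a)^('b\<times>'a)) $ p $ q = id_tensor (A ** B) $ p $ q" for p q
  proof -
    obtain b a where p: "p = (b,a)" by (cases p)
    obtain b'' a'' where q: "q = (b'',a'')" by (cases q)
    have "(id_tensor A ** id_tensor B :: complex^('b\<times>'a)^('b\<times>'a)) $ p $ q
      = (\<Sum>b'\<in>UNIV. \<Sum>a'\<in>UNIV. ((if b = b' then 1 else 0) * A$a$a') * ((if b' = b'' then 1 else 0) * B$a'$a''))"
      by (simp add: matrix_matrix_mult_def id_tensor_def sum_pair p q)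
    also have "\<dots> = (\<Sum>b'\<in>UNIV. if b' = b then (if b = b'' then (\<Sum>a'\<in>UNIV. A$a$a' * B$a'$a'') else 0) else 0)"
      by (rule sum.cong) (auto intro!: sum.cong)
    also have "\<dots> = id_tensor (A ** B) $ p $ q"
      by (simp add: id_tensor_def p q matrix_matrix_mult_def)
    finally show ?thesis .
  qed
  then show ?thesis by (simp add: vec_eq_iff)
qed

lemma trace_adj: "(\<Sum>a\<in>UNIV. adj \<sigma> $ a $ a) = cnj (\<Sum>a\<in>UNIV. \<sigma> $ a $ a)"
  by (simp add: adj_def)

lemma herm_part_zero:
  fixes T D :: "complex^('b::finite \<times> 'a::finite)^('b \<times> 'a)^'m::finite"
    and \<rho> \<sigma> :: "complex^'a^'a"
  assumes tester: "is_tester T \<rho>"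
    and ext: "T extreme_point_of testers"
    and sand: "\<And>i. \<exists>Y. D$i = T$i ** Y ** T$i"
    and sum: "(\<Sum>i\<in>UNIV. D$i) = id_tensor \<sigma>"
    and tr: "(\<Sum>a\<in>UNIV. \<sigma>$a$a) = 0"
  shows "D$i + adj (D$i) = 0"
proof -
  define H where "H = (\<chi> i. D$i + adj (D$i))"
  have hT: "adj (T$i) = T$i" for i using tester by (simp add: is_tester_def psd_herm)
  have "H = 0"
  proof (rule no_perturb[OF tester ext])
    show "adj (H$i) = H$i" for i by (simp add: H_def adj_add add.commute)
    show "\<exists>Y. H$i = T$i ** Y ** T$i" for i
    proof -
      obtain Y where Y: "D$i = T$i ** Y ** T$i" using sand by blast
      have "adj (D$i) = T$i ** adj Y ** T$i" using Y hT[of i] by (simp add: adj_mult matrix_mul_assoc)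
      then show ?thesis using Y by (auto simp: H_def sand_add)
    qed
    show "(\<Sum>i\<in>UNIV. H$i) = id_tensor (\<sigma> + adj \<sigma>)"
      by (simp add: H_def sum.distrib adj_sum[symmetric] sum adj_id_tensor id_tensor_add)
    show "(\<Sum>a\<in>UNIV. (\<sigma> + adj \<sigma>)$a$a) = 0"
      using tr trace_adj[of \<sigma>] by (simp add: sum.distrib)
  qed
  then have "H$i = 0" by simp
  then show ?thesis by (simp add: H_def)
qed

lemma perturb_zero:
  fixes T D :: "complex^('b::finite \<times> 'a::finite)^('b \<times> 'a)^'m::finite"
    and \<rho> \<sigma> :: "complex^'a^'a"
  assumes tester: "is_tester T \<rho>"
    and ext: "T extreme_point_of testers"
    and sand: "\<And>i. \<exists>Y. D$i = T$i ** Y ** T$i"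
    and sum: "(\<Sum>i\<in>UNIV. D$i) = id_tensor \<sigma>"
    and tr: "(\<Sum>a\<in>UNIV. \<sigma>$a$a) = 0"
  shows "D = 0"
proof -
  have 1: "D$i + adj (D$i) = 0" for i by (rule herm_part_zero[OF tester ext sand sum tr])
  define D' where "D' = (\<chi> i. msc \<i> (D$i))"
  have 2: "D'$i + adj (D'$i) = 0" for i
  proof (rule herm_part_zero[OF tester ext])
    show "\<exists>Y. D'$i = T$i ** Y ** T$i" for i
      using sand[of i] by (auto simp: D'_def msc_sand)
    show "(\<Sum>i\<in>UNIV. D'$i) = id_tensor (msc \<i> \<sigma>)"
      by (simp add: D'_def msc_sum[symmetric] sum id_tensor_msc)
    show "(\<Sum>a\<in>UNIV. (msc \<i> \<sigma>)$a$a) = 0"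
      using tr by (simp add: msc_def sum_distrib_left[symmetric])
  qed
  have "D$i$r$s = 0" for i r s
  proof -
    have "(D$i + adj (D$i))$r$s = 0" using 1[of i] by simp
    then have a: "D$i$r$s + cnj (D$i$s$r) = 0" by (simp add: adj_def)
    have "(D'$i + adj (D'$i))$r$s = 0" using 2[of i] by simp
    then have b: "\<i> * D$i$r$s + cnj (\<i> * D$i$s$r) = 0" by (simp add: adj_def D'_def msc_def)
    from a b show ?thesis by (simp add: complex_eq_iff)
  qed
  then show ?thesis by (simp add: vec_eq_iff)
qed



definition tot :: "complex^('m::finite \<times> 'k::finite) \<Rightarrow> complex^'k" where
  "tot x = (\<chi> p. \<Sum>i\<in>UNIV. x$(i,p))"

lemma tot_slc: "tot x = (\<Sum>i\<in>UNIV. slc i x)"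
  by (simp add: tot_def slc_def vec_eq_iff sum_component)

lemma lin_tot: "Vector_Spaces.linear (*s) (*s) (tot :: complex^('m::finite \<times> 'k::finite) \<Rightarrow> _)"
  by (rule mk_linear) (simp_all add: tot_def vec_eq_iff sum.distrib sum_distrib_left)

definition phi :: "complex^('a::finite\<times>'a) \<Rightarrow> complex^(('b::finite\<times>'a)\<times>('b\<times>'a))" where
  "phi z = fl (id_tensor (unfl z))"

lemma lin_phi: "Vector_Spaces.linear (*s) (*s) (phi :: complex^('a::finite\<times>'a) \<Rightarrow> complex^(('b::finite\<times>'a)\<times>('b\<times>'a)))"
  by (rule mk_linear) (simp_all add: phi_def fl_def id_tensor_def unfl_def vec_eq_iff algebra_simps)

lemma phi_comp: "(phi z :: complex^(('b::finite\<times>'a::finite)\<times>('b\<times>'a))) $ ((b,a),(b,a')) = z$(a,a')"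
  by (simp add: phi_def fl_def id_tensor_def unfl_def)

lemma inj_phi: "inj (phi :: complex^('a::finite\<times>'a) \<Rightarrow> complex^(('b::finite\<times>'a)\<times>('b\<times>'a)))"
proof (rule injI)
  fix z z' :: "complex^('a\<times>'a)"
  assume e: "(phi z :: complex^(('b\<times>'a)\<times>('b\<times>'a))) = phi z'"
  obtain b0 :: 'b where True by blast
  have "z$p = z'$p" for p
  proof -
    obtain a a' where p: "p = (a,a')" by (cases p)
    have "(phi z :: complex^(('b\<times>'a)\<times>('b\<times>'a))) $ ((b0,a),(b0,a')) = (phi z' :: complex^(('b\<times>'a)\<times>('b\<times>'a))) $ ((b0,a),(b0,a'))"
      using e by simp
    then show ?thesis unfolding phi_comp p .
  qed
  then show "z = z'" by (simp add: vec_eq_iff)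
qed

lemma slc_fl_unfl: "fl (unfl (slc i x)) = slc i x" by simp



theorem mainTheorem5:
  fixes T :: "complex^('b::finite \<times> 'a::finite)^('b \<times> 'a)^'m::finite"
    and \<rho> :: "complex^'a^'a"
  assumes "is_tester T \<rho>"
    and "T extreme_point_of testers"
  shows "((\<Sum>i\<in>UNIV. int (rank (T$i))^2) + int (rank \<rho>)^2 - 1
           \<le> (int (rank \<rho>) * int CARD('b))^2) \<and>
         ((\<forall>i. T$i \<noteq> 0) \<longrightarrow>
           int CARD('m) \<le> int CARD('a)^2 * (int CARD('b)^2 - 1) + 1)"
proof -
  have psdT: "\<And>i. psd (T$i)" and dens: "density \<rho>" and sumT: "(\<Sum>i\<in>UNIV. T$i) = id_tensor \<rho>"
    using assms(1) by (auto simp: is_tester_def)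
  define Q where "Q = (id_tensor \<rho> :: complex^('b\<times>'a)^('b\<times>'a))"
  have psdQ: "psd Q" unfolding Q_def sumT[symmetric] by (rule psd_sum) (rule psdT)
  have hQ: "adj Q = Q" by (rule psd_herm[OF psdQ])
  have hT: "\<And>i. adj (T$i) = T$i" using psdT by (simp add: psd_herm)
  have hr: "adj \<rho> = \<rho>" using dens by (simp add: density_def psd_herm)
  have TQ: "\<exists>Y'. T$i ** Y ** T$i = Q ** Y' ** Q" for i Y
  proof -
    have "\<And>x. Q *v x = 0 \<Longrightarrow> T$i *v x = 0"
      using psd_kernel_sum[OF psdT] unfolding Q_def sumT[symmetric] by blast
    then obtain Z where Z: "T$i = Z ** Q" using factor_kernel by blast
    then have Z2: "T$i = Q ** adj Z" using hT[of i] hQ by (metis adj_mult)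
    have "T$i ** Y ** T$i = (Q ** adj Z) ** Y ** (Z ** Q)"
      by (rule arg_cong2[where f="\<lambda>A B. A ** Y ** B"]) (fact Z2, fact Z)
    also have "\<dots> = Q ** (adj Z ** Y ** Z) ** Q" by (simp add: matrix_mul_assoc)
    finally have "T$i ** Y ** T$i = Q ** (adj Z ** Y ** Z) ** Q" .
    then show ?thesis by blast
  qed
  define S where "S i = (sandw (T$i) (T$i) :: (complex^(('b\<times>'a)\<times>('b\<times>'a))) set)" for i
  define V where "V = {x :: complex^('m\<times>(('b\<times>'a)\<times>('b\<times>'a))). \<forall>i. slc i x \<in> S i}"
  define U where "U = (sandw Q Q :: (complex^(('b\<times>'a)\<times>('b\<times>'a))) set)"
  define Z0 where "Z0 = (sandw \<rho> \<rho> \<inter> {z. trz z = 0} :: (complex^('a\<times>'a)) set)"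
  define W where "W = (phi ` Z0 :: (complex^(('b\<times>'a)\<times>('b\<times>'a))) set)"
  have subS: "\<And>i. vec.subspace (S i)" unfolding S_def by (rule subspace_sandw)
  have subV: "vec.subspace V" unfolding V_def by (rule subspace_block[OF subS])
  have subU: "vec.subspace U" unfolding U_def by (rule subspace_sandw)
  have subZ0: "vec.subspace Z0" unfolding Z0_def by (intro vec.subspace_inter subspace_sandw subspace_trz)
  have subW: "vec.subspace W" unfolding W_def by (rule vec.linear_subspace_image[OF lin_phi subZ0])
  have subTV: "vec.subspace (tot ` V)" by (rule vec.linear_subspace_image[OF lin_tot subV])
  have totU: "tot ` V \<subseteq> U"
  proof
    fix y assume "y \<in> tot ` V"
    then obtain x where x: "x \<in> V" "y = tot x" by blast
    have "slc i x \<in> U" for i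
    proof -
      have "slc i x \<in> S i" using x(1) by (simp add: V_def)
      then obtain Y where "slc i x = fl (T$i ** Y ** T$i)" by (auto simp: S_def sandw_def)
      moreover obtain Y' where "T$i ** Y ** T$i = Q ** Y' ** Q" using TQ by blast
      ultimately show ?thesis by (auto simp: U_def sandw_def)
    qed
    then show "y \<in> U" unfolding x(2) tot_slc by (intro vec.subspace_sum[OF subU])
  qed
  have WU: "W \<subseteq> U"
  proof
    fix w assume "w \<in> W"
    then obtain z where z: "z \<in> Z0" "w = phi z" by (auto simp: W_def)
    then obtain Y where Y: "z = fl (\<rho> ** Y ** \<rho>)" by (auto simp: Z0_def sandw_def)
    have "w = fl (Q ** id_tensor Y ** Q)"
      by (simp add: z(2) Y phi_def Q_def id_tensor_mult)
    then show "w \<in> U" by (auto simp: U_def sandw_def)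
  qed
  have zW: "0 \<in> W"
  proof -
    have "0 \<in> Z0" by (rule vec.subspace_0[OF subZ0])
    moreover have "phi 0 = (0 :: complex^(('b\<times>'a)\<times>('b\<times>'a)))" by (rule vec.linear_0[OF lin_phi])
    ultimately show ?thesis unfolding W_def by (metis image_eqI)
  qed
  have KEY: "x = 0" if x: "x \<in> V" "tot x \<in> W" for x
  proof -
    obtain z where z: "z \<in> Z0" "tot x = phi z" using x(2) by (auto simp: W_def)
    define D where "D = (\<chi> i. unfl (slc i x) :: complex^('b\<times>'a)^('b\<times>'a)^'m)"
    have "D = 0"
    proof (rule perturb_zero[OF assms])
      show "\<exists>Y. D$i = T$i ** Y ** T$i" for i
      proof -
        have "slc i x \<in> S i" using x(1) by (simp add: V_def)
        then obtain Y where "slc i x = fl (T$i ** Y ** T$i)" by (auto simp: S_def sandw_def)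
        then show ?thesis by (auto simp: D_def)
      qed
      show "(\<Sum>i\<in>UNIV. D$i) = id_tensor (unfl z)"
      proof -
        have "(\<Sum>i\<in>UNIV. D$i) = unfl (tot x)" by (simp add: D_def tot_slc unfl_sum)
        also have "\<dots> = id_tensor (unfl z)" by (simp add: z(2) phi_def)
        finally show ?thesis .
      qed
      show "(\<Sum>a\<in>UNIV. unfl z $ a $ a) = 0"
        using z(1) by (simp add: Z0_def trz_def unfl_def)
    qed
    have "slc i x = 0" for i
    proof -
      have "slc i x = fl (D$i)" by (simp add: D_def)
      then show ?thesis using \<open>D = 0\<close> by simp
    qed
    then show "x = 0" by (simp add: vec_eq_iff slc_def)
  qed
  have injV: "inj_on tot (vec.span V)"
  proof -
    have "inj_on tot V"
    proof (rule inj_onI)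
      fix x y assume xy: "x \<in> V" "y \<in> V" "tot x = tot y"
      have "x - y \<in> V" by (rule vec.subspace_diff[OF subV xy(1) xy(2)])
      moreover have "tot (x - y) = 0" using xy(3) by (simp add: vec.linear_diff[OF lin_tot])
      ultimately have "x - y = 0" using KEY zW by metis
      then show "x = y" by simp
    qed
    moreover have "vec.span V = V" using subV by (rule vec.span_eq_iff[THEN iffD2])
    ultimately show ?thesis by (simp only:)
  qed
  have dimTV: "vec.dim (tot ` V) = vec.dim V" by (rule vec.dim_image_eq[OF lin_tot injV])
  have dimW: "vec.dim W = vec.dim Z0"
    unfolding W_def by (rule vec.dim_image_eq[OF lin_phi]) (rule inj_on_subset[OF inj_phi], simp)
  have int0: "vec.dim (tot ` V \<inter> W) = 0"
  proof -
    have "tot ` V \<inter> W \<subseteq> {0}"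
    proof
      fix y assume "y \<in> tot ` V \<inter> W"
      then obtain x where x: "x \<in> V" "y = tot x" "y \<in> W" by blast
      then have "x = 0" using KEY by blast
      then show "y \<in> {0}" using x(2) vec.linear_0[OF lin_tot] by simp
    qed
    then show ?thesis by simp
  qed
  have sums: "vec.dim {x + y |x y. x \<in> tot ` V \<and> y \<in> W} + vec.dim (tot ` V \<inter> W) = vec.dim (tot ` V) + vec.dim W"
    by (rule vec.dim_sums_Int[OF subTV subW])
  have "{x + y |x y. x \<in> tot ` V \<and> y \<in> W} \<subseteq> U"
    using totU WU vec.subspace_add[OF subU] by blast
  then have sumsU: "vec.dim {x + y |x y. x \<in> tot ` V \<and> y \<in> W} \<le> vec.dim U" by (rule vec.dim_subset)
  have dimU: "vec.dim U = rank Q * rank Q"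
    unfolding U_def sandw_dim rank_transpose_herm[OF hQ] ..
  have rQ: "rank Q \<le> CARD('b) * rank \<rho>" unfolding Q_def by (rule rank_id_tensor_le)
  have dimZ: "rank \<rho> * rank \<rho> \<le> vec.dim Z0 + 1"
    using dim_Int_trz[OF subspace_sandw[of \<rho> \<rho>]] unfolding Z0_def sandw_dim rank_transpose_herm[OF hr] .
  have dimS: "vec.dim (S i) = rank (T$i) * rank (T$i)" for i
    unfolding S_def sandw_dim rank_transpose_herm[OF hT] ..
  have dimV: "(\<Sum>i\<in>UNIV. rank (T$i) * rank (T$i)) \<le> vec.dim V"
    using block_dim[OF subS] unfolding V_def dimS .
  have main_nat: "(\<Sum>i\<in>UNIV. rank (T$i) * rank (T$i)) + rank \<rho> * rank \<rho> \<le> rank Q * rank Q + 1"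
    using dimV dimZ sums sumsU dimU dimTV dimW int0 by linarith
  have rQ2: "rank Q * rank Q \<le> (CARD('b) * rank \<rho>) * (CARD('b) * rank \<rho>)"
    using mult_le_mono[OF rQ rQ] .
  have part1_nat: "(\<Sum>i\<in>UNIV. rank (T$i) * rank (T$i)) + rank \<rho> * rank \<rho> \<le> (rank \<rho> * CARD('b)) * (rank \<rho> * CARD('b)) + 1"
    using main_nat rQ2 by (simp add: mult_ac)
  have part1: "(\<Sum>i\<in>UNIV. int (rank (T$i))^2) + int (rank \<rho>)^2 - 1 \<le> (int (rank \<rho>) * int CARD('b))^2"
  proof -
    have "int ((\<Sum>i\<in>UNIV. rank (T$i) * rank (T$i)) + rank \<rho> * rank \<rho>) \<le> int ((rank \<rho> * CARD('b)) * (rank \<rho> * CARD('b)) + 1)"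
      using part1_nat by linarith
    then show ?thesis by (simp add: power2_eq_square of_nat_sum)
  qed
  have part2: "int CARD('m) \<le> int CARD('a)^2 * (int CARD('b)^2 - 1) + 1" if nz: "\<forall>i. T$i \<noteq> 0"
  proof -
    have r1: "1 \<le> rank (T$i)" for i
    proof (rule ccontr)
      assume "\<not> 1 \<le> rank (T$i)"
      then have "vec.dim (rows (T$i)) = 0" unfolding row_rank_def_gen by linarith
      then have "rows (T$i) \<subseteq> {0}" by (simp only: vec.dim_eq_0)
      then have R0: "row r (T$i) = 0" for r unfolding rows_def by blast
      have "T$i$r$c = 0" for r c
      proof -
        have "row r (T$i) $ c = 0" using R0[of r] by simp
        then show ?thesis by (simp add: row_def)
      qed
      then have "T$i = 0" by (simp add: vec_eq_iff)
      then show False using nz by blast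
    qed
    have "int CARD('m) = (\<Sum>i\<in>(UNIV::'m set). 1)" by simp
    also have "\<dots> \<le> (\<Sum>i\<in>UNIV. int (rank (T$i))^2)"
    proof (rule sum_mono)
      fix i
      have a: "1 \<le> int (rank (T$i))" using r1[of i] by simp
      show "1 \<le> int (rank (T$i))^2" using mult_mono[OF a a] by (simp add: power2_eq_square)
    qed
    also have "\<dots> \<le> (int (rank \<rho>) * int CARD('b))^2 - int (rank \<rho>)^2 + 1" using part1 by linarith
    also have "\<dots> = int (rank \<rho>)^2 * (int CARD('b)^2 - 1) + 1" by (simp add: algebra_simps power_mult_distrib)
    also have "\<dots> \<le> int CARD('a)^2 * (int CARD('b)^2 - 1) + 1"
    proof -
      have "rank \<rho> \<le> CARD('a)" unfolding row_rank_def_gen by (rule dim_subset_UNIV_cart_gen)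
      then have "int (rank \<rho>)^2 \<le> int CARD('a)^2" by (simp add: power_mono)
      moreover have "0 \<le> int CARD('b)^2 - 1" by simp
      ultimately show ?thesis by (simp add: mult_right_mono)
    qed
    finally show ?thesis .
  qed
  show ?thesis using part1 part2 by blast
qed


end
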